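(* Let $G$ be a finitely generated group, and let $\mu$ be a symmetric, finitely supported probability measure on $G$ whose support generates $G$ and such that $\mu(e)>0$. Then the sequence $(\mu^{\ast n})_{n=1}^\infty$ measures index uniformly.
   Context: $\mu^{\ast n}$ is the $n$-fold convolution of $\mu$ (the distribution of the $n$th step of the random walk from the identity with step distribution $\mu$); symmetric means $\mu(x)=\mu(x^{-1})$. A sequence $(\mu_n)$ of probability measures measures index uniformly if $\mu_n(xH)\to1/[G:H]$ uniformly over all $x\in G$ and all subgroups $H$ of $G$, with $1/[G:H]=0$ when $H$ has infinite index. *)

theory Defs
  imports "HOL-Algebra.Algebra"
begin

text \<open>A probability measure on a (discrete) group is represented by its mass function
  mu :: 'a => real. We only deal with finitely supported ones.\<close>

definition supp_fn :: "('a, 'b) monoid_scheme \<Rightarrow> ('a \<Rightarrow> real) \<Rightarrow> 'a set" where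
  "supp_fn G f = {g \<in> carrier G. f g \<noteq> 0}"

text \<open>n-fold convolution: distribution of X_n = s_1 s_2 ... s_n with i.i.d. steps s_i ~ mu,
  starting at the identity.\<close>
fun conv_pow :: "('a, 'b) monoid_scheme \<Rightarrow> ('a \<Rightarrow> real) \<Rightarrow> nat \<Rightarrow> 'a \<Rightarrow> real" where
  "conv_pow G mu 0 = (\<lambda>g. if g = \<one>\<^bsub>G\<^esub> then 1 else 0)"
| "conv_pow G mu (Suc n) =
     (\<lambda>g. if g \<in> carrier G
          then (\<Sum>s\<in>supp_fn G mu. conv_pow G mu n (g \<otimes>\<^bsub>G\<^esub> inv\<^bsub>G\<^esub> s) * mu s)
          else 0)"

definition mass :: "('a, 'b) monoid_scheme \<Rightarrow> ('a \<Rightarrow> real) \<Rightarrow> 'a set \<Rightarrow> real" where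
  "mass G f A = (\<Sum>g\<in>supp_fn G f \<inter> A. f g)"

text \<open>1/[G:H], with the convention 1/[G:H] = 0 for infinite index.\<close>
definition inv_index :: "('a, 'b) monoid_scheme \<Rightarrow> 'a set \<Rightarrow> real" where
  "inv_index G H = (if finite (rcosets\<^bsub>G\<^esub> H) then 1 / real (card (rcosets\<^bsub>G\<^esub> H)) else 0)"

definition measures_index_uniformly ::
    "('a, 'b) monoid_scheme \<Rightarrow> (nat \<Rightarrow> 'a \<Rightarrow> real) \<Rightarrow> bool" where
  "measures_index_uniformly G mus \<longleftrightarrow>
     (\<forall>\<epsilon>>0. \<exists>N. \<forall>n\<ge>N. \<forall>x\<in>carrier G. \<forall>H. subgroup H G \<longrightarrow>
        \<bar>mass G (mus n) (x <#\<^bsub>G\<^esub> H) - inv_index G H\<bar> < \<epsilon>)"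

definition finitely_generated_group :: "('a, 'b) monoid_scheme \<Rightarrow> bool" where
  "finitely_generated_group G \<longleftrightarrow>
     (\<exists>S. finite S \<and> S \<subseteq> carrier G \<and> generate G S = carrier G)"

end

theory Submission
  imports Defs
begin


lemma wcs:
  fixes w x :: "'s \<Rightarrow> real"
  assumes "finite A" "\<And>s. s \<in> A \<Longrightarrow> w s \<ge> 0"
  shows "(\<Sum>s\<in>A. w s * x s)\<^sup>2 \<le> (\<Sum>s\<in>A. w s) * (\<Sum>s\<in>A. w s * (x s)\<^sup>2)"
proof -
  define W where "W = (\<Sum>s\<in>A. w s)"
  define P where "P = (\<Sum>s\<in>A. w s * x s)"
  define R where "R = (\<Sum>s\<in>A. w s * (x s)\<^sup>2)"
  have "0 \<le> (\<Sum>s\<in>A. \<Sum>t\<in>A. w s * w t * (x s - x t)\<^sup>2)"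
    using assms by (intro sum_nonneg mult_nonneg_nonneg) auto
  also have "\<dots> = (\<Sum>s\<in>A. (w s * (x s)\<^sup>2 * W + w s * R - 2 * (w s * x s) * P))"
  proof (intro sum.cong refl)
    fix s assume "s \<in> A"
    have "(\<Sum>t\<in>A. w s * w t * (x s - x t)\<^sup>2) =
       (\<Sum>t\<in>A. (w s * (x s)\<^sup>2) * w t + w s * (w t * (x t)\<^sup>2) - 2 * (w s * x s) * (w t * x t))"
      by (intro sum.cong refl) (simp add: power2_eq_square algebra_simps)
    also have "\<dots> = w s * (x s)\<^sup>2 * W + w s * R - 2 * (w s * x s) * P"
      unfolding W_def R_def P_def
      by (simp only: sum_subtractf sum.distrib sum_distrib_left)
    finally show "(\<Sum>t\<in>A. w s * w t * (x s - x t)\<^sup>2) = w s * (x s)\<^sup>2 * W + w s * R - 2 * (w s * x s) * P" .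
  qed
  also have "\<dots> = R * W + W * R - 2 * P * P"
  proof -
    have 1: "(\<Sum>s\<in>A. w s * (x s)\<^sup>2 * W) = R * W" unfolding R_def by (simp add: sum_distrib_right)
    have 2: "(\<Sum>s\<in>A. w s * R) = W * R" unfolding W_def by (simp add: sum_distrib_right)
    have 3: "(\<Sum>s\<in>A. 2 * (w s * x s) * P) = 2 * P * P" unfolding P_def
      by (simp add: sum_distrib_right mult.assoc sum_distrib_left[symmetric])
    show ?thesis by (simp only: sum_subtractf sum.distrib 1 2 3)
  qed
  finally show ?thesis unfolding W_def[symmetric] R_def[symmetric] P_def[symmetric]
    by (simp add: power2_eq_square algebra_simps)
qed

lemma sq_sum_le_card:
  fixes D :: "nat \<Rightarrow> real"
  shows "(\<Sum>i<k. D i)\<^sup>2 \<le> real k * (\<Sum>i<k. (D i)\<^sup>2)"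
  using wcs[of "{..<k}" "\<lambda>_. 1" D] by simp

locale walk =
  fixes Xs :: "'c set" and S :: "'s set" and w :: "'s \<Rightarrow> real"
    and \<phi> :: "'s \<Rightarrow> 'c \<Rightarrow> 'c" and \<iota> :: "'s \<Rightarrow> 's" and e :: 's
  assumes finS: "finite S"
    and wpos: "\<And>s. s \<in> S \<Longrightarrow> w s > 0"
    and wsum: "(\<Sum>s\<in>S. w s) = 1"
    and eS: "e \<in> S"
    and phi_e: "\<And>c. c \<in> Xs \<Longrightarrow> \<phi> e c = c"
    and phiX: "\<And>s c. s \<in> S \<Longrightarrow> c \<in> Xs \<Longrightarrow> \<phi> s c \<in> Xs"
    and iotaS: "\<And>s. s \<in> S \<Longrightarrow> \<iota> s \<in> S"
    and iota_iota: "\<And>s. s \<in> S \<Longrightarrow> \<iota> (\<iota> s) = s"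
    and w_iota: "\<And>s. s \<in> S \<Longrightarrow> w (\<iota> s) = w s"
    and phi_iota: "\<And>s c. s \<in> S \<Longrightarrow> c \<in> Xs \<Longrightarrow> \<phi> (\<iota> s) (\<phi> s c) = c"
    and conn: "\<And>v B. v \<in> B \<Longrightarrow> B \<subseteq> Xs \<Longrightarrow> (\<And>s c. s \<in> S \<Longrightarrow> c \<in> B \<Longrightarrow> \<phi> s c \<in> B) \<Longrightarrow> Xs \<subseteq> B"
begin

definition supp :: "('c \<Rightarrow> real) \<Rightarrow> 'c set" where "supp f = {c\<in>Xs. f c \<noteq> 0}"
definition fs :: "('c \<Rightarrow> real) \<Rightarrow> bool" where "fs f \<longleftrightarrow> finite (supp f)"
definition tot :: "('c \<Rightarrow> real) \<Rightarrow> real" where "tot f = sum f (supp f)"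
definition T :: "('c \<Rightarrow> real) \<Rightarrow> 'c \<Rightarrow> real" where "T f c = (\<Sum>s\<in>S. w s * f (\<phi> s c))"
definition inner :: "('c \<Rightarrow> real) \<Rightarrow> ('c \<Rightarrow> real) \<Rightarrow> real" where "inner f g = tot (\<lambda>c. f c * g c)"
definition Q :: "('c \<Rightarrow> real) \<Rightarrow> real" where "Q f = tot (\<lambda>c. (f c)\<^sup>2)"
definition E :: "('c \<Rightarrow> real) \<Rightarrow> real" where
  "E f = tot (\<lambda>c. \<Sum>s\<in>S. w s * (f (\<phi> s c) - f c)\<^sup>2) / 2"

lemma wnn: "s \<in> S \<Longrightarrow> w s \<ge> 0" using wpos[of s] by simp

lemma phi_iota2: "s \<in> S \<Longrightarrow> c \<in> Xs \<Longrightarrow> \<phi> s (\<phi> (\<iota> s) c) = c"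
  using phi_iota[of "\<iota> s" c] iota_iota[of s] iotaS[of s] by simp

lemma tot_eq_sum:
  assumes "finite A" "A \<subseteq> Xs" "\<And>c. c \<in> Xs \<Longrightarrow> c \<notin> A \<Longrightarrow> f c = 0"
  shows "tot f = sum f A"
  unfolding tot_def
  by (rule sum.mono_neutral_left) (use assms in \<open>auto simp: supp_def\<close>)

lemma tot_cong: "(\<And>c. c \<in> Xs \<Longrightarrow> f c = g c) \<Longrightarrow> tot f = tot g"
proof -
  assume h: "\<And>c. c \<in> Xs \<Longrightarrow> f c = g c"
  have "supp f = supp g" using h by (auto simp: supp_def)
  then show ?thesis unfolding tot_def using h by (intro sum.cong) (auto simp: supp_def)
qed

lemma fs_cong: "(\<And>c. c \<in> Xs \<Longrightarrow> f c = g c) \<Longrightarrow> fs f = fs g"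
proof -
  assume h: "\<And>c. c \<in> Xs \<Longrightarrow> f c = g c"
  have "supp f = supp g" using h by (auto simp: supp_def)
  then show ?thesis by (simp add: fs_def)
qed

lemma fs_sub: "fs f \<Longrightarrow> (\<And>c. c \<in> Xs \<Longrightarrow> f c = 0 \<Longrightarrow> g c = 0) \<Longrightarrow> fs g"
  unfolding fs_def supp_def by (erule rev_finite_subset) auto

lemma fs_finX: "finite Xs \<Longrightarrow> fs f"
  unfolding fs_def supp_def by auto

lemma fs_add: "fs f \<Longrightarrow> fs g \<Longrightarrow> fs (\<lambda>c. f c + g c)"
proof -
  assume a: "fs f" "fs g"
  have "supp (\<lambda>c. f c + g c) \<subseteq> supp f \<union> supp g" unfolding supp_def by auto
  moreover have "finite (supp f \<union> supp g)" using a unfolding fs_def by simp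
  ultimately show ?thesis unfolding fs_def by (rule finite_subset)
qed

lemma fs_diff: "fs f \<Longrightarrow> fs g \<Longrightarrow> fs (\<lambda>c. f c - g c)"
proof -
  assume a: "fs f" "fs g"
  have "supp (\<lambda>c. f c - g c) \<subseteq> supp f \<union> supp g" unfolding supp_def by auto
  moreover have "finite (supp f \<union> supp g)" using a unfolding fs_def by simp
  ultimately show ?thesis unfolding fs_def by (rule finite_subset)
qed

lemma fs_multl: "fs f \<Longrightarrow> fs (\<lambda>c. g c * f c)"
  by (erule fs_sub) simp

lemma fs_multr: "fs f \<Longrightarrow> fs (\<lambda>c. f c * g c)"
  by (erule fs_sub) simp

lemma fs_sum: "(\<And>s. s \<in> A \<Longrightarrow> fs (h s)) \<Longrightarrow> fs (\<lambda>c. \<Sum>s\<in>A. h s c)"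
proof (induction A rule: infinite_finite_induct)
  case (infinite A)
  then show ?case by (simp add: fs_def supp_def)
next
  case empty
  then show ?case by (simp add: fs_def supp_def)
next
  case (insert x F)
  then show ?case by (simp add: fs_add)
qed

lemma fs_comp:
  assumes "s \<in> S" "fs f" shows "fs (\<lambda>c. f (\<phi> s c))"
proof -
  have "supp (\<lambda>c. f (\<phi> s c)) \<subseteq> \<phi> (\<iota> s) ` supp f"
  proof
    fix c assume "c \<in> supp (\<lambda>c. f (\<phi> s c))"
    then have "c \<in> Xs" "f (\<phi> s c) \<noteq> 0" by (auto simp: supp_def)
    then show "c \<in> \<phi> (\<iota> s) ` supp f"
      using assms phiX phi_iota by (auto simp: supp_def intro!: image_eqI[of _ _ "\<phi> s c"])
  qed
  then show ?thesis using assms unfolding fs_def by (meson finite_imageI finite_subset)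
qed

lemma fs_T: "fs f \<Longrightarrow> fs (T f)"
  unfolding T_def by (intro fs_sum fs_multl fs_comp) auto

lemma fs_abs: "fs f \<Longrightarrow> fs (\<lambda>c. \<bar>f c\<bar>)"
  by (erule fs_sub) simp

lemma fs_sq: "fs f \<Longrightarrow> fs (\<lambda>c. (f c)\<^sup>2)"
  by (erule fs_sub) simp

lemma tot_add: assumes "fs f" "fs g" shows "tot (\<lambda>c. f c + g c) = tot f + tot g"
proof -
  let ?A = "supp f \<union> supp g"
  have fA: "finite ?A" using assms by (auto simp: fs_def)
  have "tot (\<lambda>c. f c + g c) = sum (\<lambda>c. f c + g c) ?A"
    by (rule tot_eq_sum[OF fA]) (auto simp: supp_def)
  moreover have "tot f = sum f ?A" by (rule tot_eq_sum[OF fA]) (auto simp: supp_def)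
  moreover have "tot g = sum g ?A" by (rule tot_eq_sum[OF fA]) (auto simp: supp_def)
  ultimately show ?thesis by (simp add: sum.distrib)
qed

lemma tot_diff: assumes "fs f" "fs g" shows "tot (\<lambda>c. f c - g c) = tot f - tot g"
proof -
  let ?A = "supp f \<union> supp g"
  have fA: "finite ?A" using assms by (auto simp: fs_def)
  have "tot (\<lambda>c. f c - g c) = sum (\<lambda>c. f c - g c) ?A"
    by (rule tot_eq_sum[OF fA]) (auto simp: supp_def)
  moreover have "tot f = sum f ?A" by (rule tot_eq_sum[OF fA]) (auto simp: supp_def)
  moreover have "tot g = sum g ?A" by (rule tot_eq_sum[OF fA]) (auto simp: supp_def)
  ultimately show ?thesis by (simp add: sum_subtractf)
qed

lemma tot_cmult: "tot (\<lambda>c. k * f c) = k * tot f"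
proof (cases "k = 0")
  case True then show ?thesis by (simp add: tot_def supp_def)
next
  case False
  then have "supp (\<lambda>c. k * f c) = supp f" by (auto simp: supp_def)
  then show ?thesis by (simp add: tot_def sum_distrib_left)
qed

lemma tot_zero: "tot (\<lambda>c. 0) = 0" by (simp add: tot_def supp_def)

lemma tot_sum:
  assumes "finite A" "\<And>s. s \<in> A \<Longrightarrow> fs (h s)"
  shows "tot (\<lambda>c. \<Sum>s\<in>A. h s c) = (\<Sum>s\<in>A. tot (h s))"
  using assms
proof (induction A rule: finite_induct)
  case empty then show ?case by (simp add: tot_zero)
next
  case (insert x F)
  then show ?case by (simp add: tot_add fs_sum)
qed

lemma tot_mono: assumes "fs f" "fs g" "\<And>c. c \<in> Xs \<Longrightarrow> f c \<le> g c" shows "tot f \<le> tot g"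
proof -
  let ?A = "supp f \<union> supp g"
  have fA: "finite ?A" using assms by (auto simp: fs_def)
  have "tot f = sum f ?A" by (rule tot_eq_sum[OF fA]) (auto simp: supp_def)
  moreover have "tot g = sum g ?A" by (rule tot_eq_sum[OF fA]) (auto simp: supp_def)
  ultimately show ?thesis using assms(3) by (auto simp: supp_def intro!: sum_mono)
qed

lemma tot_nonneg: "(\<And>c. c \<in> Xs \<Longrightarrow> f c \<ge> 0) \<Longrightarrow> tot f \<ge> 0"
  unfolding tot_def supp_def by (rule sum_nonneg) auto

lemma tot_ge_sum:
  assumes "fs f" "\<And>c. c \<in> Xs \<Longrightarrow> f c \<ge> 0" "finite A" "A \<subseteq> Xs"
  shows "sum f A \<le> tot f"
proof -
  let ?B = "A \<union> supp f"
  have fB: "finite ?B" using assms by (auto simp: fs_def)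
  have "tot f = sum f ?B" by (rule tot_eq_sum[OF fB]) (use assms in \<open>auto simp: supp_def\<close>)
  moreover have "sum f A \<le> sum f ?B"
    by (rule sum_mono2[OF fB]) (use assms in \<open>auto simp: supp_def\<close>)
  ultimately show ?thesis by simp
qed

lemma tot_abs: "fs f \<Longrightarrow> \<bar>tot f\<bar> \<le> tot (\<lambda>c. \<bar>f c\<bar>)"
proof -
  have "supp (\<lambda>c. \<bar>f c\<bar>) = supp f" by (auto simp: supp_def)
  then show ?thesis by (simp add: tot_def sum_abs)
qed

lemma tot_reindex:
  assumes "s \<in> S" "fs f" shows "tot (\<lambda>c. f (\<phi> s c)) = tot f"
proof -
  let ?g = "\<phi> (\<iota> s)"
  have inj: "inj_on ?g (supp f)"
    by (rule inj_on_inverseI[of _ "\<phi> s"]) (use assms phi_iota2 in \<open>auto simp: supp_def\<close>)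
  have fin: "finite (?g ` supp f)" using assms by (auto simp: fs_def)
  have "tot (\<lambda>c. f (\<phi> s c)) = sum (\<lambda>c. f (\<phi> s c)) (?g ` supp f)"
  proof (rule tot_eq_sum[OF fin])
    show "?g ` supp f \<subseteq> Xs" using assms iotaS phiX by (auto simp: supp_def)
    fix c assume "c \<in> Xs" "c \<notin> ?g ` supp f"
    then show "f (\<phi> s c) = 0" using assms phiX phi_iota
      by (auto simp: supp_def image_iff) (metis)
  qed
  also have "\<dots> = sum (\<lambda>c. f (\<phi> s (?g c))) (supp f)"
    by (rule sum.reindex[OF inj, unfolded comp_def])
  also have "\<dots> = tot f" unfolding tot_def
    by (rule sum.cong) (use assms phi_iota2 in \<open>auto simp: supp_def\<close>)
  finally show ?thesis .
qed

lemmas fs_intros = fs_add fs_diff fs_multl fs_multr fs_sum fs_comp fs_T fs_abs fs_sq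

lemma tot_T: assumes "fs f" shows "tot (T f) = tot f"
proof -
  have "tot (T f) = (\<Sum>s\<in>S. tot (\<lambda>c. w s * f (\<phi> s c)))"
    unfolding T_def using assms by (intro tot_sum finS fs_intros)
  also have "\<dots> = (\<Sum>s\<in>S. w s * tot f)"
    by (intro sum.cong refl) (simp add: tot_cmult tot_reindex assms)
  also have "\<dots> = tot f" by (simp add: sum_distrib_right[symmetric] wsum)
  finally show ?thesis .
qed

lemma T_const: "c \<in> Xs \<Longrightarrow> T (\<lambda>_. u) c = u"
  by (simp add: T_def sum_distrib_right[symmetric] wsum)

lemma T_diff_const: "c \<in> Xs \<Longrightarrow> T (\<lambda>c. f c - u) c = T f c - u"
  by (simp add: T_def right_diff_distrib sum_subtractf sum_distrib_right[symmetric] wsum)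

lemma T_nonneg: "(\<And>c. c \<in> Xs \<Longrightarrow> f c \<ge> 0) \<Longrightarrow> c \<in> Xs \<Longrightarrow> T f c \<ge> 0"
  unfolding T_def by (intro sum_nonneg mult_nonneg_nonneg wnn) (auto simp: phiX)

lemma inner_comm: "inner f g = inner g f"
  unfolding inner_def by (simp add: mult.commute)

lemma selfadj:
  assumes "fs f" "fs g" shows "inner (T f) g = inner f (T g)"
proof -
  have "inner (T f) g = tot (\<lambda>c. \<Sum>s\<in>S. w s * (f (\<phi> s c) * g c))"
    unfolding inner_def T_def by (simp add: sum_distrib_right mult.assoc)
  also have "\<dots> = (\<Sum>s\<in>S. w s * tot (\<lambda>c. f (\<phi> s c) * g c))"
    using assms by (simp add: tot_sum finS fs_intros tot_cmult)
  also have "\<dots> = (\<Sum>s\<in>S. w (\<iota> s) * tot (\<lambda>d. f d * g (\<phi> (\<iota> s) d)))"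
  proof (intro sum.cong refl)
    fix s assume s: "s \<in> S"
    have "tot (\<lambda>c. f (\<phi> s c) * g c) = tot (\<lambda>d. f (\<phi> s (\<phi> (\<iota> s) d)) * g (\<phi> (\<iota> s) d))"
      using tot_reindex[of "\<iota> s" "\<lambda>c. f (\<phi> s c) * g c"] s assms iotaS
      by (simp add: fs_intros)
    also have "\<dots> = tot (\<lambda>d. f d * g (\<phi> (\<iota> s) d))"
      by (rule tot_cong) (simp add: phi_iota2 s)
    finally show "w s * tot (\<lambda>c. f (\<phi> s c) * g c) = w (\<iota> s) * tot (\<lambda>d. f d * g (\<phi> (\<iota> s) d))"
      by (simp add: w_iota s)
  qed
  also have "\<dots> = (\<Sum>s\<in>S. w s * tot (\<lambda>d. f d * g (\<phi> s d)))"
    by (rule sum.reindex_bij_witness[of S \<iota> \<iota>]) (auto simp: iotaS iota_iota)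
  also have "\<dots> = tot (\<lambda>c. \<Sum>s\<in>S. w s * (f c * g (\<phi> s c)))"
    using assms by (simp add: tot_sum finS fs_intros tot_cmult)
  also have "\<dots> = inner f (T g)"
    unfolding inner_def T_def by (simp add: sum_distrib_left mult.left_commute)
  finally show ?thesis .
qed

lemma energy:
  assumes "fs f" shows "E f = Q f - inner f (T f)"
proof -
  have "tot (\<lambda>c. \<Sum>s\<in>S. w s * (f (\<phi> s c) - f c)\<^sup>2) = (\<Sum>s\<in>S. w s * tot (\<lambda>c. (f (\<phi> s c) - f c)\<^sup>2))"
    using assms by (simp add: tot_sum finS fs_intros tot_cmult)
  also have "\<dots> = (\<Sum>s\<in>S. w s * (2 * Q f - 2 * tot (\<lambda>c. f (\<phi> s c) * f c)))"
  proof (intro sum.cong refl)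
    fix s assume s: "s \<in> S"
    have "tot (\<lambda>c. (f (\<phi> s c) - f c)\<^sup>2) = tot (\<lambda>c. ((f (\<phi> s c))\<^sup>2 + (f c)\<^sup>2) - 2 * (f (\<phi> s c) * f c))"
      by (rule tot_cong) (simp add: power2_eq_square algebra_simps)
    also have "\<dots> = tot (\<lambda>c. (f (\<phi> s c))\<^sup>2) + Q f - 2 * tot (\<lambda>c. f (\<phi> s c) * f c)"
      using s assms unfolding Q_def by (simp add: tot_diff tot_add fs_intros tot_cmult)
    also have "tot (\<lambda>c. (f (\<phi> s c))\<^sup>2) = Q f"
      unfolding Q_def using tot_reindex[of s "\<lambda>c. (f c)\<^sup>2"] s assms by (simp add: fs_intros)
    finally show "w s * tot (\<lambda>c. (f (\<phi> s c) - f c)\<^sup>2) = w s * (2 * Q f - 2 * tot (\<lambda>c. f (\<phi> s c) * f c))"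
      by simp
  qed
  also have "\<dots> = 2 * Q f - 2 * (\<Sum>s\<in>S. w s * tot (\<lambda>c. f (\<phi> s c) * f c))"
    by (simp add: right_diff_distrib sum_subtractf sum_distrib_right[symmetric] wsum sum_distrib_left
        mult.left_commute)
  also have "(\<Sum>s\<in>S. w s * tot (\<lambda>c. f (\<phi> s c) * f c)) = inner (T f) f"
  proof -
    have "inner (T f) f = tot (\<lambda>c. \<Sum>s\<in>S. w s * (f (\<phi> s c) * f c))"
      unfolding inner_def T_def by (simp add: sum_distrib_right mult.assoc)
    also have "\<dots> = (\<Sum>s\<in>S. w s * tot (\<lambda>c. f (\<phi> s c) * f c))"
      using assms by (simp add: tot_sum finS fs_intros tot_cmult)
    finally show ?thesis by simp
  qed
  finally show ?thesis unfolding E_def by (simp add: inner_comm)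
qed

lemma E_nonneg: "E f \<ge> 0"
  unfolding E_def by (intro divide_nonneg_pos tot_nonneg sum_nonneg mult_nonneg_nonneg wnn) auto

lemma contraction:
  assumes "fs f" shows "Q (T f) \<le> Q f - 2 * w e * E f"
proof -
  define a where "a = w e"
  define S' where "S' = S - {e}"
  define b where "b = (\<Sum>s\<in>S'. w s)"
  have finS': "finite S'" using finS by (simp add: S'_def)
  have ab: "a + b = 1" unfolding a_def b_def S'_def using wsum eS finS
    by (simp add: sum.remove)
  define h where "h = (\<lambda>c. \<Sum>s\<in>S'. w s * f (\<phi> s c))"
  have fsh: "fs h" unfolding h_def using assms by (intro fs_intros) (auto simp: S'_def)
  have Th: "\<And>c. c \<in> Xs \<Longrightarrow> T f c = a * f c + h c"
    unfolding T_def h_def a_def S'_def using eS finS phi_e by (simp add: sum.remove)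
  have hsq: "\<And>c. (h c)\<^sup>2 \<le> b * (\<Sum>s\<in>S'. w s * (f (\<phi> s c))\<^sup>2)"
    unfolding h_def b_def by (rule wcs[OF finS']) (simp add: S'_def wnn)
  have b0: "b \<ge> 0" unfolding b_def by (rule sum_nonneg) (simp add: S'_def wnn)
  have "tot (\<lambda>c. (h c)\<^sup>2) \<le> tot (\<lambda>c. b * (\<Sum>s\<in>S'. w s * (f (\<phi> s c))\<^sup>2))"
    using assms fsh hsq by (intro tot_mono fs_intros) (auto simp: S'_def)
  also have "\<dots> = b * (\<Sum>s\<in>S'. w s * Q f)"
  proof -
    have "tot (\<lambda>c. \<Sum>s\<in>S'. w s * (f (\<phi> s c))\<^sup>2) = (\<Sum>s\<in>S'. tot (\<lambda>c. w s * (f (\<phi> s c))\<^sup>2))"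
      using assms by (intro tot_sum finS' fs_intros) (auto simp: S'_def)
    also have "\<dots> = (\<Sum>s\<in>S'. w s * Q f)"
    proof (intro sum.cong refl)
      fix s assume "s \<in> S'"
      then have s: "s \<in> S" by (simp add: S'_def)
      show "tot (\<lambda>c. w s * (f (\<phi> s c))\<^sup>2) = w s * Q f"
        unfolding Q_def using tot_reindex[of s "\<lambda>c. (f c)\<^sup>2"] s assms
        by (simp add: tot_cmult fs_intros)
    qed
    finally show ?thesis by (simp add: tot_cmult)
  qed
  also have "\<dots> = b * b * Q f" by (simp add: b_def sum_distrib_right[symmetric])
  finally have th: "tot (\<lambda>c. (h c)\<^sup>2) \<le> b * b * Q f" .
  have QT: "Q (T f) = a * a * Q f + 2 * a * inner f h + tot (\<lambda>c. (h c)\<^sup>2)"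
  proof -
    have "Q (T f) = tot (\<lambda>c. a * a * (f c)\<^sup>2 + 2 * a * (f c * h c) + (h c)\<^sup>2)"
      unfolding Q_def by (rule tot_cong) (simp add: Th power2_eq_square algebra_simps)
    also have "\<dots> = a * a * Q f + 2 * a * inner f h + tot (\<lambda>c. (h c)\<^sup>2)"
      unfolding Q_def inner_def using assms fsh by (simp add: tot_add tot_cmult fs_intros)
    finally show ?thesis .
  qed
  have IT: "inner f (T f) = a * Q f + inner f h"
  proof -
    have "inner f (T f) = tot (\<lambda>c. a * (f c)\<^sup>2 + f c * h c)"
      unfolding inner_def by (rule tot_cong) (simp add: Th power2_eq_square algebra_simps)
    also have "\<dots> = a * Q f + inner f h"
      unfolding Q_def inner_def using assms fsh by (simp add: tot_add tot_cmult fs_intros)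
    finally show ?thesis .
  qed
  have "Q (T f) \<le> a * a * Q f + 2 * a * inner f h + b * b * Q f" using QT th by simp
  also have "\<dots> = Q f - 2 * a * (Q f - inner f (T f))"
  proof -
    have bb: "b = 1 - a" using ab by simp
    show ?thesis unfolding bb IT by (simp add: algebra_simps)
  qed
  finally show ?thesis using energy[OF assms] by (simp add: a_def)
qed

definition wmin :: real where "wmin = Min (w ` S)"

lemma wmin_le: "s \<in> S \<Longrightarrow> wmin \<le> w s"
  unfolding wmin_def using finS by simp

lemma wmin_pos: "wmin > 0"
proof -
  have "wmin \<in> w ` S" unfolding wmin_def using finS eS by (intro Min_in) auto
  then show ?thesis using wpos by auto
qed

fun ball :: "'c \<Rightarrow> nat \<Rightarrow> 'c set" where
  "ball v 0 = {v}"
| "ball v (Suc k) = ball v k \<union> (\<Union>s\<in>S. \<phi> s ` ball v k)"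

fun lay :: "'c \<Rightarrow> nat \<Rightarrow> 'c set" where
  "lay v 0 = {v}"
| "lay v (Suc j) = ball v (Suc j) - ball v j"

definition D :: "('c \<Rightarrow> real) \<Rightarrow> 'c \<Rightarrow> nat \<Rightarrow> real" where
  "D g v j = Max (insert 0 ((\<lambda>(p,s). \<bar>g (\<phi> s p) - g p\<bar>) ` (lay v j \<times> S)))"

lemma ball_fin: "finite (ball v k)"
  by (induction k) (auto simp: finS)

lemma ball_X: "v \<in> Xs \<Longrightarrow> ball v k \<subseteq> Xs"
  by (induction k) (auto simp: phiX)

lemma ball_Suc_mono: "ball v k \<subseteq> ball v (Suc k)" by auto

lemma ball_mono: "j \<le> k \<Longrightarrow> ball v j \<subseteq> ball v k"
  by (induction k) (auto simp: le_Suc_eq)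

lemma lay_sub: "lay v j \<subseteq> ball v j"
  by (cases j) auto

lemma lay_fin: "finite (lay v j)"
  using lay_sub ball_fin by (meson finite_subset)

lemma lay_disj: assumes "i < j" shows "lay v i \<inter> lay v j = {}"
proof -
  obtain j' where j: "j = Suc j'" using assms by (cases j) auto
  have "lay v i \<subseteq> ball v j'" using lay_sub[of v i] ball_mono[of i j' v] assms j by auto
  then show ?thesis using j by auto
qed

lemma D_ge: assumes "p \<in> lay v j" "s \<in> S" shows "\<bar>g (\<phi> s p) - g p\<bar> \<le> D g v j"
  unfolding D_def using assms lay_fin finS
  by (intro Max_ge) (auto intro!: image_eqI[of _ _ "(p,s)"])

lemma D_nn: "0 \<le> D g v j"
  unfolding D_def using lay_fin finS by (intro Max_ge) auto

lemma D_sq: "(D g v j)\<^sup>2 \<le> (\<Sum>p\<in>lay v j. \<Sum>s\<in>S. (g (\<phi> s p) - g p)\<^sup>2)"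
proof -
  have "D g v j \<in> insert 0 ((\<lambda>(p,s). \<bar>g (\<phi> s p) - g p\<bar>) ` (lay v j \<times> S))"
    unfolding D_def using lay_fin finS by (intro Max_in) auto
  then show ?thesis
  proof
    assume "D g v j = 0"
    then show ?thesis by (simp add: sum_nonneg)
  next
    assume "D g v j \<in> (\<lambda>(p,s). \<bar>g (\<phi> s p) - g p\<bar>) ` (lay v j \<times> S)"
    then obtain p s where ps: "p \<in> lay v j" "s \<in> S" and Dv: "D g v j = \<bar>g (\<phi> s p) - g p\<bar>" by auto
    have "(D g v j)\<^sup>2 = (g (\<phi> s p) - g p)\<^sup>2" by (simp add: Dv)
    also have "\<dots> \<le> (\<Sum>s\<in>S. (g (\<phi> s p) - g p)\<^sup>2)"
      by (rule member_le_sum[OF ps(2)]) (auto simp: finS)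
    also have "\<dots> \<le> (\<Sum>p\<in>lay v j. \<Sum>s\<in>S. (g (\<phi> s p) - g p)\<^sup>2)"
      by (rule member_le_sum[OF ps(1)]) (auto simp: lay_fin intro: sum_nonneg)
    finally show ?thesis .
  qed
qed

lemma claim: "c \<in> ball v j \<Longrightarrow> g v - (\<Sum>i<j. D g v i) \<le> g c"
proof (induction j arbitrary: c)
  case 0 then show ?case by simp
next
  case (Suc j)
  show ?case
  proof (cases "c \<in> ball v j")
    case True
    then show ?thesis using Suc.IH[OF True] D_nn[of g v j] by simp
  next
    case False
    then obtain s p where sp: "s \<in> S" "p \<in> ball v j" "c = \<phi> s p" using Suc.prems by auto
    have "p \<in> lay v j"
    proof (cases j)
      case 0 then show ?thesis using sp by simp
    next
      case (Suc j')
      have "p \<notin> ball v j'"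
      proof
        assume "p \<in> ball v j'"
        then have "c \<in> ball v (Suc j')" using sp by auto
        then show False using False Suc by simp
      qed
      then show ?thesis using sp Suc by simp
    qed
    then have "\<bar>g c - g p\<bar> \<le> D g v j" using D_ge[of p v j s g] sp by simp
    then show ?thesis using Suc.IH[OF sp(2)] by simp
  qed
qed

lemma card_ball: "(\<And>j. j < k \<Longrightarrow> ball v j \<noteq> ball v (Suc j)) \<Longrightarrow> card (ball v k) \<ge> k + 1"
proof (induction k)
  case 0 then show ?case by simp
next
  case (Suc k)
  have "ball v k \<subset> ball v (Suc k)" using Suc.prems[of k] ball_Suc_mono[of v k] by auto
  then have "card (ball v k) < card (ball v (Suc k))" by (rule psubset_card_mono[OF ball_fin])
  then show ?case using Suc by simp
qed

lemma ball_closed: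
  assumes "v \<in> Xs" "ball v (Suc j) = ball v j" "j \<le> k" shows "Xs \<subseteq> ball v k"
proof -
  have "Xs \<subseteq> ball v j"
  proof (rule conn[of v])
    show "v \<in> ball v j" using ball_mono[of 0 j v] by auto
    show "ball v j \<subseteq> Xs" by (rule ball_X[OF assms(1)])
    fix s c assume "s \<in> S" "c \<in> ball v j"
    then have "\<phi> s c \<in> ball v (Suc j)" by auto
    then show "\<phi> s c \<in> ball v j" using assms(2) by metis
  qed
  then show ?thesis using ball_mono[OF assms(3)] by auto
qed

lemma iso_core:
  assumes vX: "v \<in> Xs" and fsg: "fs g" and tabs: "tot (\<lambda>c. \<bar>g c\<bar>) \<le> 2"
    and tz: "finite Xs \<Longrightarrow> tot g = 0" and M0: "0 < g v" and M1: "g v \<le> 1"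
  shows "wmin * (g v)^3 / 40 \<le> E g"
proof -
  define M where "M = g v"
  define k where "k = nat \<lceil>4 / M\<rceil>"
  have Mpos: "M > 0" "M \<le> 1" using M0 M1 by (auto simp: M_def)
  have k1: "real k \<ge> 4 / M" unfolding k_def by linarith
  have k2: "real k \<le> 4 / M + 1"
  proof -
    have "4 / M > 0" using Mpos by simp
    then have "0 \<le> \<lceil>4 / M\<rceil>" by linarith
    then have "real k = real_of_int \<lceil>4 / M\<rceil>" unfolding k_def by simp
    also have "\<dots> \<le> 4 / M + 1" using ceiling_correct[of "4 / M"] by linarith
    finally show ?thesis .
  qed
  have k3: "real k * M \<le> 5" using k2 Mpos
    by (simp add: field_simps)
  have kM: "real k * M \<ge> 4" using k1 Mpos by (simp add: field_simps)
  define G where "G = (\<lambda>p. \<Sum>s\<in>S. (g (\<phi> s p) - g p)\<^sup>2)"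
  define G' where "G' = (\<lambda>p. \<Sum>s\<in>S. w s * (g (\<phi> s p) - g p)\<^sup>2)"
  have GG': "\<And>p. G p \<le> G' p / wmin"
  proof -
    fix p
    have "G p \<le> (\<Sum>s\<in>S. w s * (g (\<phi> s p) - g p)\<^sup>2 / wmin)"
      unfolding G_def
    proof (rule sum_mono)
      fix s assume s: "s \<in> S"
      have "wmin * (g (\<phi> s p) - g p)\<^sup>2 \<le> w s * (g (\<phi> s p) - g p)\<^sup>2"
        by (rule mult_right_mono[OF wmin_le[OF s]]) simp
      then show "(g (\<phi> s p) - g p)\<^sup>2 \<le> w s * (g (\<phi> s p) - g p)\<^sup>2 / wmin"
        using wmin_pos by (simp add: field_simps)
    qed
    also have "\<dots> = G' p / wmin" unfolding G'_def by (simp add: sum_divide_distrib)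
    finally show "G p \<le> G' p / wmin" .
  qed
  have fsG': "fs G'" unfolding G'_def using fsg by (intro fs_intros) auto
  have G'nn: "\<And>p. G' p \<ge> 0" unfolding G'_def by (intro sum_nonneg mult_nonneg_nonneg) (auto simp: wnn)
  have Dsum: "(\<Sum>i<k. (D g v i)\<^sup>2) \<le> 2 * E g / wmin"
  proof -
    have "(\<Sum>i<k. (D g v i)\<^sup>2) \<le> (\<Sum>i<k. \<Sum>p\<in>lay v i. G p)"
      unfolding G_def by (intro sum_mono D_sq)
    also have "\<dots> = (\<Sum>p\<in>(\<Union>i<k. lay v i). G p)"
      by (rule sum.UNION_disjoint[symmetric]) (auto simp: lay_fin dest: lay_disj[of _ _ v]
          simp add: disjoint_iff, (metis lay_disj disjoint_iff nat_neq_iff)+)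
    also have "\<dots> \<le> (\<Sum>p\<in>(\<Union>i<k. lay v i). G' p / wmin)"
      by (intro sum_mono GG')
    also have "\<dots> = (\<Sum>p\<in>(\<Union>i<k. lay v i). G' p) / wmin"
      by (simp add: sum_divide_distrib)
    also have "\<dots> \<le> tot G' / wmin"
    proof (intro divide_right_mono tot_ge_sum fsG' G'nn)
      show "finite (\<Union>i<k. lay v i)" by (simp add: lay_fin)
      show "(\<Union>i<k. lay v i) \<subseteq> Xs" using lay_sub ball_X[OF vX] by blast
    qed (use wmin_pos in auto)
    also have "tot G' = 2 * E g" unfolding E_def G'_def by simp
    finally show ?thesis .
  qed
  have half: "M / 2 \<le> (\<Sum>i<k. D g v i)"
  proof (rule ccontr)
    assume "\<not> M / 2 \<le> (\<Sum>i<k. D g v i)"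
    then have big: "\<And>c. c \<in> ball v k \<Longrightarrow> g c > M / 2"
      using claim[of _ v k g] unfolding M_def by fastforce
    show False
    proof (cases "\<exists>j<k. ball v j = ball v (Suc j)")
      case True
      then obtain j where j: "j < k" "ball v (Suc j) = ball v j" by metis
      have XB: "Xs \<subseteq> ball v k" using ball_closed[OF vX j(2)] j(1) by simp
      have BX: "ball v k = Xs" using XB ball_X[OF vX] by auto
      then have fX: "finite Xs" using ball_fin by metis
      have "tot g = sum g (ball v k)" by (rule tot_eq_sum) (use BX fX in auto)
      also have "\<dots> > 0"
      proof (rule sum_pos[OF ball_fin])
        show "ball v k \<noteq> {}" using ball_mono[of 0 k v] by auto
        fix i assume "i \<in> ball v k"
        then show "0 < g i" using big[of i] Mpos by linarith
      qed
      finally show False using tz[OF fX] by simp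
    next
      case False
      then have cb: "card (ball v k) \<ge> k + 1" by (intro card_ball) auto
      have ne: "ball v k \<noteq> {}" using ball_mono[of 0 k v] by auto
      have "real (card (ball v k)) * (M / 2) = (\<Sum>c\<in>ball v k. M / 2)" by simp
      also have "\<dots> < sum g (ball v k)" by (rule sum_strict_mono[OF ball_fin ne big]) 
      also have "\<dots> \<le> sum (\<lambda>c. \<bar>g c\<bar>) (ball v k)" by (intro sum_mono) simp
      also have "\<dots> \<le> tot (\<lambda>c. \<bar>g c\<bar>)"
        by (intro tot_ge_sum fs_abs fsg ball_fin ball_X vX) simp
      also have "\<dots> \<le> 2" by (rule tabs)
      finally have "real (card (ball v k)) * (M / 2) < 2" .
      moreover have "real (card (ball v k)) * (M / 2) \<ge> (real k + 1) * (M / 2)"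
        using cb Mpos by (intro mult_right_mono) auto
      ultimately show False using kM Mpos by (simp add: algebra_simps)
    qed
  qed
  have "(M / 2)\<^sup>2 \<le> (\<Sum>i<k. D g v i)\<^sup>2"
    using half Mpos by (intro power_mono) auto
  also have "\<dots> \<le> real k * (\<Sum>i<k. (D g v i)\<^sup>2)" by (rule sq_sum_le_card)
  also have "\<dots> \<le> real k * (2 * E g / wmin)" by (intro mult_left_mono Dsum) simp
  finally have "M\<^sup>2 * wmin \<le> 8 * real k * E g"
    using wmin_pos by (simp add: field_simps power2_eq_square)
  then have "M * (M\<^sup>2 * wmin) \<le> M * (8 * real k * E g)" using Mpos by (intro mult_left_mono) auto
  also have "\<dots> = 8 * (real k * M) * E g" by (simp add: algebra_simps)
  also have "\<dots> \<le> 8 * 5 * E g" using k3 E_nonneg[of g] by (intro mult_right_mono) (auto simp: mult.commute)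
  finally show ?thesis unfolding M_def[symmetric] by (simp add: power2_eq_square power3_eq_cube algebra_simps)
qed

lemma iso:
  assumes fsg: "fs g" and tabs: "tot (\<lambda>c. \<bar>g c\<bar>) \<le> 2" and g1: "\<And>c. c \<in> Xs \<Longrightarrow> \<bar>g c\<bar> \<le> 1"
    and tz: "finite Xs \<Longrightarrow> tot g = 0"
  shows "wmin * (Q g)^3 / 320 \<le> E g"
proof (cases "supp g = {}")
  case True
  then have "Q g = 0" unfolding Q_def tot_def supp_def by auto
  then show ?thesis using E_nonneg[of g] by simp
next
  case False
  define M where "M = Max ((\<lambda>c. \<bar>g c\<bar>) ` supp g)"
  have fin: "finite (supp g)" using fsg by (simp add: fs_def)
  have "M \<in> (\<lambda>c. \<bar>g c\<bar>) ` supp g" unfolding M_def using fin False by (intro Max_in) auto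
  then obtain v where v: "v \<in> supp g" "\<bar>g v\<bar> = M" by auto
  have vX: "v \<in> Xs" and Mpos: "M > 0" using v by (auto simp: supp_def)
  have M1: "M \<le> 1" using g1[OF vX] v by simp
  have leM: "\<And>c. c \<in> Xs \<Longrightarrow> \<bar>g c\<bar> \<le> M"
  proof -
    fix c assume c: "c \<in> Xs"
    show "\<bar>g c\<bar> \<le> M"
    proof (cases "g c = 0")
      case True then show ?thesis using Mpos by simp
    next
      case False
      then have "c \<in> supp g" using c by (simp add: supp_def)
      then show ?thesis unfolding M_def using fin by (intro Max_ge) auto
    qed
  qed
  have "Q g \<le> tot (\<lambda>c. M * \<bar>g c\<bar>)"
    unfolding Q_def
  proof (intro tot_mono fs_intros fsg)
    fix c assume c: "c \<in> Xs"
    have "(g c)\<^sup>2 = \<bar>g c\<bar> * \<bar>g c\<bar>" by (simp add: power2_eq_square abs_mult_self_eq)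
    also have "\<dots> \<le> M * \<bar>g c\<bar>" by (intro mult_right_mono leM c) simp
    finally show "(g c)\<^sup>2 \<le> M * \<bar>g c\<bar>" .
  qed
  also have "\<dots> = M * tot (\<lambda>c. \<bar>g c\<bar>)" by (rule tot_cmult)
  also have "\<dots> \<le> M * 2" using tabs Mpos by (intro mult_left_mono) auto
  finally have QM: "Q g \<le> 2 * M" by simp
  have Qnn: "Q g \<ge> 0" unfolding Q_def by (rule tot_nonneg) simp
  have "wmin * (Q g)^3 / 320 \<le> wmin * (2 * M)^3 / 320"
    using wmin_pos Qnn QM by (intro divide_right_mono mult_left_mono power_mono) auto
  also have "\<dots> = wmin * M^3 / 40" by (simp add: power3_eq_cube)
  also have "\<dots> \<le> E g"
  proof (cases "g v > 0")
    case True
    then have "g v = M" using v by simp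
    then show ?thesis using iso_core[OF vX fsg tabs tz] True M1 by simp
  next
    case False
    then have gv: "- g v = M" using v by simp
    have fs': "fs (\<lambda>c. - g c)" using fsg by (rule fs_sub) simp
    have "tot (\<lambda>c. \<bar>- g c\<bar>) \<le> 2" using tabs by simp
    moreover have "finite Xs \<Longrightarrow> tot (\<lambda>c. - g c) = 0"
      using tz tot_cmult[of "-1" g] by simp
    ultimately have "wmin * (- g v)^3 / 40 \<le> E (\<lambda>c. - g c)"
      using iso_core[OF vX fs'] gv Mpos M1 by simp
    moreover have "E (\<lambda>c. - g c) = E g"
      unfolding E_def by (simp add: power2_eq_square algebra_simps)
    ultimately show ?thesis using gv by simp
  qed
  finally show ?thesis .
qed

definition delta :: "'c \<Rightarrow> 'c \<Rightarrow> real" where "delta o' = (\<lambda>c. if c = o' then 1 else 0)"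
definition F :: "'c \<Rightarrow> nat \<Rightarrow> 'c \<Rightarrow> real" where "F o' n = (T ^^ n) (delta o')"

lemma F_Suc: "F o' (Suc n) = T (F o' n)" by (simp add: F_def)

lemma fs_delta: "fs (delta o')"
  unfolding fs_def supp_def delta_def by (rule finite_subset[of _ "{o'}"]) auto

lemma fs_F: "fs (F o' n)"
  by (induction n) (simp_all add: F_def fs_delta fs_T)

lemma F_nn: "c \<in> Xs \<Longrightarrow> F o' n c \<ge> 0"
proof (induction n arbitrary: c)
  case 0 then show ?case by (simp add: F_def delta_def)
next
  case (Suc n) then show ?case by (simp add: F_Suc T_nonneg)
qed

lemma tot_delta: "o' \<in> Xs \<Longrightarrow> tot (delta o') = 1"
  by (subst tot_eq_sum[of "{o'}"]) (auto simp: delta_def)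

lemma tot_F: "o' \<in> Xs \<Longrightarrow> tot (F o' n) = 1"
  by (induction n) (simp_all add: F_def tot_delta tot_T fs_F[unfolded F_def])

lemma F_le1: assumes "o' \<in> Xs" "c \<in> Xs" shows "F o' n c \<le> 1"
proof -
  have "sum (F o' n) {c} \<le> tot (F o' n)" by (intro tot_ge_sum fs_F F_nn) (use assms in auto)
  then show ?thesis using tot_F[OF assms(1)] by simp
qed

lemma rep: assumes "c \<in> Xs" shows "F o' (m + n) c = inner (F o' m) (F c n)"
  using assms
proof (induction n arbitrary: m)
  case 0
  have "inner (F o' m) (F c 0) = sum (\<lambda>d. F o' m d * F c 0 d) {c}"
    unfolding inner_def by (rule tot_eq_sum) (use 0 in \<open>auto simp: F_def delta_def\<close>)
  then show ?case by (simp add: F_def delta_def)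
next
  case (Suc n)
  have "F o' (m + Suc n) c = F o' (Suc m + n) c" by simp
  also have "\<dots> = inner (F o' (Suc m)) (F c n)" by (rule Suc.IH[OF Suc.prems])
  also have "\<dots> = inner (F o' m) (F c (Suc n))" by (simp add: F_Suc selfadj fs_F)
  finally show ?case .
qed

lemma inner_le: assumes "fs f" "fs h" shows "\<bar>inner f h\<bar> \<le> (Q f + Q h) / 2"
proof -
  have fs2: "fs (\<lambda>c. (f c)\<^sup>2 + (h c)\<^sup>2)" using assms by (intro fs_add fs_sq)
  have fs3: "fs (\<lambda>c. 1/2 * ((f c)\<^sup>2 + (h c)\<^sup>2))" using fs2 by (rule fs_multl)
  have "\<bar>inner f h\<bar> \<le> tot (\<lambda>c. \<bar>f c * h c\<bar>)" unfolding inner_def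
    using assms by (intro tot_abs fs_multr)
  also have "\<dots> \<le> tot (\<lambda>c. 1/2 * ((f c)\<^sup>2 + (h c)\<^sup>2))"
  proof (rule tot_mono[OF _ fs3])
    show "fs (\<lambda>c. \<bar>f c * h c\<bar>)" using assms by (intro fs_abs fs_multr)
    fix c
    have "0 \<le> (\<bar>f c\<bar> - \<bar>h c\<bar>)\<^sup>2" by (rule zero_le_power2)
    also have "\<dots> = (f c)\<^sup>2 + (h c)\<^sup>2 - 2 * \<bar>f c * h c\<bar>"
      unfolding power2_diff by (simp add: abs_mult)
    finally have "2 * \<bar>f c * h c\<bar> \<le> (f c)\<^sup>2 + (h c)\<^sup>2" by simp
    then show "\<bar>f c * h c\<bar> \<le> 1/2 * ((f c)\<^sup>2 + (h c)\<^sup>2)" by simp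
  qed
  also have "\<dots> = 1/2 * (Q f + Q h)"
    unfolding Q_def tot_cmult using assms by (simp only: tot_add fs_sq)
  finally show ?thesis by simp
qed

definition kap :: real where "kap = w e * wmin / 160"

lemma kap_pos: "kap > 0" unfolding kap_def using wpos[OF eS] wmin_pos by simp

lemma Q_nn: "Q f \<ge> 0" unfolding Q_def by (rule tot_nonneg) simp

definition G :: "real \<Rightarrow> 'c \<Rightarrow> nat \<Rightarrow> 'c \<Rightarrow> real" where "G u o' n = (\<lambda>c. F o' n c - u)"

context
  fixes u :: real and o' :: 'c
  assumes ufin: "finite Xs \<Longrightarrow> u * real (card Xs) = 1"
    and uinf: "infinite Xs \<Longrightarrow> u = 0"
    and oX: "o' \<in> Xs"
begin

abbreviation GG :: "nat \<Rightarrow> 'c \<Rightarrow> real" where "GG n \<equiv> G u o' n"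

lemma u01: "0 \<le> u \<and> u \<le> 1"
proof (cases "finite Xs")
  case True
  then have "card Xs \<ge> 1" using oX by (metis One_nat_def Suc_leI card_gt_0_iff empty_iff)
  then show ?thesis using ufin[OF True] by (smt (verit) mult_cancel_left1 mult_le_cancel_left1 of_nat_1 of_nat_le_iff)
next
  case False then show ?thesis using uinf by simp
qed

lemma fs_G: "fs (GG n)"
proof (cases "finite Xs")
  case True then show ?thesis by (rule fs_finX)
next
  case False
  have "GG n = F o' n" unfolding G_def using uinf[OF False] by simp
  then show ?thesis using fs_F[of o' n] by simp
qed

lemma G_le1: "c \<in> Xs \<Longrightarrow> \<bar>GG n c\<bar> \<le> 1"
  using F_nn[of c o' n] F_le1[OF oX, of c n] u01 unfolding G_def by auto

lemma tot_abs_G: "tot (\<lambda>c. \<bar>GG n c\<bar>) \<le> 2"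
proof (cases "finite Xs")
  case True
  have "tot (\<lambda>c. \<bar>GG n c\<bar>) = sum (\<lambda>c. \<bar>GG n c\<bar>) Xs" by (rule tot_eq_sum[OF True]) auto
  also have "\<dots> \<le> sum (\<lambda>c. F o' n c + u) Xs"
  proof (intro sum_mono)
    fix c assume "c \<in> Xs"
    then show "\<bar>GG n c\<bar> \<le> F o' n c + u" using F_nn[of c o' n] u01 unfolding G_def by (simp add: abs_le_iff)
  qed
  also have "\<dots> = sum (F o' n) Xs + u * real (card Xs)" by (simp add: sum.distrib)
  also have "sum (F o' n) Xs = 1" using tot_F[OF oX, of n] tot_eq_sum[OF True, of "F o' n"] by simp
  finally show ?thesis using ufin[OF True] by simp
next
  case False
  have "tot (\<lambda>c. \<bar>GG n c\<bar>) = tot (F o' n)"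
    by (rule tot_cong) (unfold G_def, simp add: uinf[OF False] F_nn)
  then show ?thesis using tot_F[OF oX] by simp
qed

lemma tot_G: "finite Xs \<Longrightarrow> tot (GG n) = 0"
proof -
  assume fX: "finite Xs"
  have "tot (GG n) = sum (GG n) Xs" by (rule tot_eq_sum[OF fX]) auto
  also have "\<dots> = sum (F o' n) Xs - u * real (card Xs)" by (simp add: G_def sum_subtractf)
  also have "sum (F o' n) Xs = 1" using tot_F[OF oX, of n] tot_eq_sum[OF fX, of "F o' n"] by simp
  finally show ?thesis using ufin[OF fX] by simp
qed

lemma Q_step: "Q (GG (Suc n)) \<le> Q (GG n) - kap * (Q (GG n))^3"
proof -
  have "Q (GG (Suc n)) = Q (T (GG n))"
    unfolding Q_def by (rule tot_cong) (simp add: G_def F_Suc T_diff_const)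
  also have "\<dots> \<le> Q (GG n) - 2 * w e * E (GG n)" by (rule contraction[OF fs_G])
  also have "\<dots> \<le> Q (GG n) - 2 * w e * (wmin * (Q (GG n))^3 / 320)"
  proof -
    have "wmin * (Q (GG n))^3 / 320 \<le> E (GG n)" by (rule iso[OF fs_G tot_abs_G G_le1 tot_G])
    then have "2 * w e * (wmin * (Q (GG n))^3 / 320) \<le> 2 * w e * E (GG n)"
      using wpos[OF eS] by (intro mult_left_mono) auto
    then show ?thesis by linarith
  qed
  finally show ?thesis by (simp add: kap_def)
qed

lemma Q_dec: "Q (GG (Suc n)) \<le> Q (GG n)"
  using Q_step[of n] kap_pos Q_nn[of "GG n"] by (smt (verit) zero_le_power mult_nonneg_nonneg)

lemma Q_anti: "m \<le> n \<Longrightarrow> Q (GG n) \<le> Q (GG m)"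
proof (induction n)
  case 0 then show ?case by simp
next
  case (Suc n)
  then show ?case using Q_dec[of n] by (cases "m = Suc n") auto
qed

lemma Q0: "Q (GG 0) \<le> 2"
proof -
  have "Q (GG 0) \<le> tot (\<lambda>c. \<bar>GG 0 c\<bar>)"
    unfolding Q_def
  proof (intro tot_mono fs_intros fs_G)
    fix c assume c: "c \<in> Xs"
    have "(GG 0 c)\<^sup>2 = \<bar>GG 0 c\<bar> * \<bar>GG 0 c\<bar>" by (simp add: power2_eq_square abs_mult_self_eq)
    also have "\<dots> \<le> 1 * \<bar>GG 0 c\<bar>" by (intro mult_right_mono G_le1 c) simp
    finally show "(GG 0 c)\<^sup>2 \<le> \<bar>GG 0 c\<bar>" by simp
  qed
  then show ?thesis using tot_abs_G[of 0] by simp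
qed

lemma Q_small:
  assumes eps: "\<epsilon> > 0" and n: "n \<ge> nat \<lceil>2 / (kap * \<epsilon>^3)\<rceil>"
  shows "Q (GG n) < \<epsilon>"
proof (rule ccontr)
  assume "\<not> Q (GG n) < \<epsilon>"
  then have ge: "\<And>m. m \<le> n \<Longrightarrow> Q (GG m) \<ge> \<epsilon>" using Q_anti by fastforce
  have "\<And>m. m \<le> n \<Longrightarrow> Q (GG m) \<le> 2 - real m * kap * \<epsilon>^3"
  proof -
    fix m show "m \<le> n \<Longrightarrow> Q (GG m) \<le> 2 - real m * kap * \<epsilon>^3"
    proof (induction m)
      case 0 then show ?case using Q0 by simp
    next
      case (Suc m)
      have "\<epsilon>^3 \<le> (Q (GG m))^3" using ge[of m] Suc.prems eps by (intro power_mono) auto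
      then have "kap * \<epsilon>^3 \<le> kap * (Q (GG m))^3" using kap_pos by (intro mult_left_mono) auto
      then show ?case using Suc Q_step[of m] by (simp add: algebra_simps)
    qed
  qed
  then have "\<epsilon> \<le> 2 - real n * kap * \<epsilon>^3" using ge[of n] by force
  moreover have "real n * (kap * \<epsilon>^3) \<ge> 2"
  proof -
    have pos: "kap * \<epsilon>^3 > 0" using kap_pos eps by simp
    have "real n \<ge> 2 / (kap * \<epsilon>^3)" using n by linarith
    then show ?thesis using pos by (simp add: field_simps)
  qed
  ultimately show False using eps by (simp add: algebra_simps)
qed

end

lemma G_inner:
  assumes ufin: "finite Xs \<Longrightarrow> u * real (card Xs) = 1" and uinf: "infinite Xs \<Longrightarrow> u = 0"
    and oX: "o' \<in> Xs" and cX: "c \<in> Xs"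
  shows "inner (\<lambda>d. F o' m d - u) (\<lambda>d. F c n d - u) = F o' (m + n) c - u"
proof (cases "finite Xs")
  case True
  have s1: "sum (F o' m) Xs = 1" using tot_F[OF oX, of m] tot_eq_sum[OF True, of "F o' m"] by simp
  have s2: "sum (F c n) Xs = 1" using tot_F[OF cX, of n] tot_eq_sum[OF True, of "F c n"] by simp
  have "inner (\<lambda>d. F o' m d - u) (\<lambda>d. F c n d - u) = sum (\<lambda>d. (F o' m d - u) * (F c n d - u)) Xs"
    unfolding inner_def by (rule tot_eq_sum[OF True]) auto
  also have "\<dots> = sum (\<lambda>d. F o' m d * F c n d) Xs - u * sum (F c n) Xs - u * sum (F o' m) Xs + u * (u * real (card Xs))"
    by (simp add: algebra_simps sum_subtractf sum.distrib sum_distrib_left)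
  also have "sum (\<lambda>d. F o' m d * F c n d) Xs = inner (F o' m) (F c n)"
    unfolding inner_def by (rule tot_eq_sum[OF True, symmetric]) auto
  also have "\<dots> = F o' (m + n) c" by (rule rep[OF cX, symmetric])
  finally show ?thesis using s1 s2 ufin[OF True] by simp
next
  case False
  then show ?thesis using rep[OF cX, of o' m n] uinf by simp
qed

theorem uniform:
  assumes ufin: "finite Xs \<Longrightarrow> u * real (card Xs) = 1" and uinf: "infinite Xs \<Longrightarrow> u = 0"
    and oX: "o' \<in> Xs" and cX: "c \<in> Xs" and eps: "\<epsilon> > 0"
    and m: "m \<ge> 2 * nat \<lceil>2 / (kap * \<epsilon>^3)\<rceil>"
  shows "\<bar>F o' m c - u\<bar> < \<epsilon>"
proof -
  define n where "n = m div 2"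
  define m' where "m' = m - n"
  define N where "N = nat \<lceil>2 / (kap * \<epsilon>^3)\<rceil>"
  have mN: "2 * N \<le> m" using m by (simp add: N_def)
  have mm: "m = m' + n" unfolding n_def m'_def by simp
  have n1: "n \<ge> N" unfolding n_def using mN by presburger
  have m1: "m' \<ge> N" unfolding m'_def n_def using mN by presburger
  note n1 = n1[unfolded N_def] and m1 = m1[unfolded N_def]
  have "F o' m c - u = inner (G u o' m') (G u c n)"
    unfolding G_def mm
    by (rule G_inner[OF ufin uinf oX cX, symmetric])
  also have "\<bar>\<dots>\<bar> \<le> (Q (G u o' m') + Q (G u c n)) / 2"
    by (intro inner_le fs_G[OF ufin uinf oX] fs_G[OF ufin uinf cX])
  also have "\<dots> < \<epsilon>"
    using Q_small[OF ufin uinf oX eps m1] Q_small[OF ufin uinf cX eps n1] by simp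
  finally show ?thesis .
qed

end


context group begin
lemma mem_lcos:
  assumes H: "subgroup H G" and z: "z \<in> carrier G"
  shows "y \<in> z <# H \<longleftrightarrow> y \<in> carrier G \<and> inv z \<otimes> y \<in> H"
proof
  assume "y \<in> z <# H"
  then obtain h where h: "h \<in> H" "y = z \<otimes> h" unfolding l_coset_def by auto
  have hc: "h \<in> carrier G" by (rule subgroup.mem_carrier[OF H h(1)])
  have yc: "y \<in> carrier G" using h(2) hc z by simp
  have "inv z \<otimes> y = h" using inv_solve_left'[OF hc z yc] h(2) by simp
  then show "y \<in> carrier G \<and> inv z \<otimes> y \<in> H" using h yc by simp
next
  assume a: "y \<in> carrier G \<and> inv z \<otimes> y \<in> H"
  have c: "inv z \<otimes> y \<in> carrier G" using a z by simp
  have "y = z \<otimes> (inv z \<otimes> y)" using inv_solve_left'[OF c z, of y] a by simp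
  then show "y \<in> z <# H" using a unfolding l_coset_def by auto
qed
lemma set_inv_lcos:
  assumes H: "subgroup H G" and x: "x \<in> carrier G"
  shows "set_inv (x <# H) = H #> inv x"
proof
  show "set_inv (x <# H) \<subseteq> H #> inv x"
  proof
    fix y assume "y \<in> set_inv (x <# H)"
    then obtain h where h: "h \<in> H" "y = inv (x \<otimes> h)" unfolding SET_INV_def l_coset_def by auto
    have hc: "h \<in> carrier G" by (rule subgroup.mem_carrier[OF H h(1)])
    have "y = inv h \<otimes> inv x" using h(2) hc x by (simp add: inv_mult_group)
    moreover have "inv h \<in> H" by (rule subgroup.m_inv_closed[OF H h(1)])
    ultimately show "y \<in> H #> inv x" unfolding r_coset_def by auto
  qed
next
  show "H #> inv x \<subseteq> set_inv (x <# H)"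
  proof
    fix y assume "y \<in> H #> inv x"
    then obtain h where h: "h \<in> H" "y = h \<otimes> inv x" unfolding r_coset_def by auto
    have hc: "h \<in> carrier G" by (rule subgroup.mem_carrier[OF H h(1)])
    have "y = inv (x \<otimes> inv h)" using h(2) hc x by (simp add: inv_mult_group)
    moreover have "inv h \<in> H" by (rule subgroup.m_inv_closed[OF H h(1)])
    ultimately show "y \<in> set_inv (x <# H)" unfolding SET_INV_def l_coset_def by auto
  qed
qed

lemma set_inv_inv: assumes "A \<subseteq> carrier G" shows "set_inv (set_inv A) = A"
proof
  show "set_inv (set_inv A) \<subseteq> A"
  proof
    fix y assume "y \<in> set_inv (set_inv A)"
    then obtain a where "a \<in> A" "y = inv (inv a)" unfolding SET_INV_def by auto
    then show "y \<in> A" using assms by auto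
  qed
  show "A \<subseteq> set_inv (set_inv A)"
  proof
    fix y assume y: "y \<in> A"
    then have "y = inv (inv y)" using assms by auto
    then show "y \<in> set_inv (set_inv A)" using y unfolding SET_INV_def by auto
  qed
qed

lemma set_inv_rcos:
  assumes H: "subgroup H G" and x: "x \<in> carrier G"
  shows "set_inv (H #> x) = inv x <# H"
proof -
  have "set_inv (inv x <# H) = H #> x" using set_inv_lcos[OF H inv_closed[OF x]] x by simp
  then have "set_inv (H #> x) = set_inv (set_inv (inv x <# H))" by simp
  also have "\<dots> = inv x <# H"
    by (rule set_inv_inv[OF l_coset_subset_G[OF subgroup.subset[OF H] inv_closed[OF x]]])
  finally show ?thesis .
qed

lemma lcos_rcos_bij:
  assumes H: "subgroup H G"
  shows "bij_betw (\<lambda>A. set_inv A) {x <# H | x. x \<in> carrier G} (rcosets H)"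
proof (rule bij_betw_byWitness[where f' = "\<lambda>A. set_inv A"])
  have Hc: "H \<subseteq> carrier G" by (rule subgroup.subset[OF H])
  show "\<forall>a\<in>{x <# H |x. x \<in> carrier G}. set_inv (set_inv a) = a"
  proof
    fix a assume "a \<in> {x <# H |x. x \<in> carrier G}"
    then obtain x where "x \<in> carrier G" "a = x <# H" by auto
    then show "set_inv (set_inv a) = a" using l_coset_subset_G[OF Hc] set_inv_inv by simp
  qed
  show "\<forall>a'\<in>rcosets H. set_inv (set_inv a') = a'"
  proof
    fix a assume "a \<in> rcosets H"
    then obtain x where "x \<in> carrier G" "a = H #> x" unfolding RCOSETS_def by auto
    then show "set_inv (set_inv a) = a" using r_coset_subset_G[OF Hc] set_inv_inv by simp
  qed
  show "(\<lambda>A. set_inv A) ` {x <# H |x. x \<in> carrier G} \<subseteq> rcosets H"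
  proof
    fix b assume "b \<in> (\<lambda>A. set_inv A) ` {x <# H |x. x \<in> carrier G}"
    then obtain x where x: "x \<in> carrier G" "b = set_inv (x <# H)" by auto
    then have "b = H #> inv x" using set_inv_lcos[OF H] by simp
    then show "b \<in> rcosets H" using x unfolding RCOSETS_def by auto
  qed
  show "(\<lambda>A. set_inv A) ` (rcosets H) \<subseteq> {x <# H |x. x \<in> carrier G}"
  proof
    fix b assume "b \<in> (\<lambda>A. set_inv A) ` (rcosets H)"
    then obtain x where x: "x \<in> carrier G" "b = set_inv (H #> x)" unfolding RCOSETS_def by auto
    then have "b = inv x <# H" using set_inv_rcos[OF H] by simp
    then show "b \<in> {x <# H |x. x \<in> carrier G}" using x by auto
  qed
qed

end

locale rw = group G for G (structure) +
  fixes mu :: "'a \<Rightarrow> real"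
  assumes mu_nn: "\<And>g. mu g \<ge> 0"
    and mu_out: "\<And>g. g \<notin> carrier G \<Longrightarrow> mu g = 0"
    and fin_supp: "finite (supp_fn G mu)"
    and mu_sum: "(\<Sum>g\<in>supp_fn G mu. mu g) = 1"
    and mu_sym: "\<And>g. g \<in> carrier G \<Longrightarrow> mu (inv g) = mu g"
    and mu_gen: "generate G (supp_fn G mu) = carrier G"
    and mu_one: "mu \<one> > 0"
begin

abbreviation "S \<equiv> supp_fn G mu"
abbreviation "cp \<equiv> conv_pow G mu"

lemma S_carrier: "s \<in> S \<Longrightarrow> s \<in> carrier G" by (simp add: supp_fn_def)
lemma S_pos: "s \<in> S \<Longrightarrow> mu s > 0" using mu_nn[of s] by (simp add: supp_fn_def)
lemma S_inv: "s \<in> S \<Longrightarrow> inv s \<in> S" using mu_sym[of s] by (simp add: supp_fn_def)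
lemma one_S: "\<one> \<in> S" using mu_one by (simp add: supp_fn_def)

lemma cp_out: "g \<notin> carrier G \<Longrightarrow> cp n g = 0"
proof (cases n)
  case 0
  assume "g \<notin> carrier G"
  then have "g \<noteq> \<one>" by auto
  then show ?thesis using 0 by simp
qed simp

lemma cp_nn: "cp n g \<ge> 0"
proof (induction n arbitrary: g)
  case 0 then show ?case by simp
next
  case (Suc n) then show ?case by (simp add: sum_nonneg mu_nn)
qed

lemma cp_left: "g \<in> carrier G \<Longrightarrow> cp (Suc n) g = (\<Sum>s\<in>S. mu s * cp n (inv s \<otimes> g))"
proof (induction n arbitrary: g)
  case 0
  show ?case
  proof (simp add: 0, intro sum.cong refl)
    fix s assume s: "s \<in> S"
    have sc: "s \<in> carrier G" by (rule S_carrier[OF s])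
    have "g \<otimes> inv s = \<one> \<longleftrightarrow> g = s" using inv_solve_right'[OF one_closed 0 sc] 0 sc by simp
    moreover have "inv s \<otimes> g = \<one> \<longleftrightarrow> g = s" using inv_solve_left'[OF one_closed sc 0] sc by auto
    ultimately show "(if g \<otimes> inv s = \<one> then 1 else 0) * mu s = mu s * (if inv s \<otimes> g = \<one> then 1 else 0)"
      by simp
  qed
next
  case (Suc n)
  have "cp (Suc (Suc n)) g = (\<Sum>t\<in>S. cp (Suc n) (g \<otimes> inv t) * mu t)" using Suc.prems by simp
  also have "\<dots> = (\<Sum>t\<in>S. (\<Sum>s\<in>S. mu s * cp n (inv s \<otimes> (g \<otimes> inv t))) * mu t)"
  proof (intro sum.cong refl)
    fix t assume t: "t \<in> S"
    have "g \<otimes> inv t \<in> carrier G" using Suc.prems S_carrier[OF t] by simp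
    from Suc.IH[OF this] show "cp (Suc n) (g \<otimes> inv t) * mu t = (\<Sum>s\<in>S. mu s * cp n (inv s \<otimes> (g \<otimes> inv t))) * mu t"
      by (simp only:)
  qed
  also have "\<dots> = (\<Sum>t\<in>S. \<Sum>s\<in>S. mu s * (cp n (inv s \<otimes> (g \<otimes> inv t)) * mu t))"
    by (simp add: sum_distrib_right mult.assoc)
  also have "\<dots> = (\<Sum>s\<in>S. \<Sum>t\<in>S. mu s * (cp n (inv s \<otimes> (g \<otimes> inv t)) * mu t))"
    by (rule sum.swap)
  also have "\<dots> = (\<Sum>s\<in>S. mu s * (\<Sum>t\<in>S. cp n ((inv s \<otimes> g) \<otimes> inv t) * mu t))"
    by (intro sum.cong refl) (simp add: sum_distrib_left m_assoc S_carrier Suc.prems)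
  also have "\<dots> = (\<Sum>s\<in>S. mu s * cp (Suc n) (inv s \<otimes> g))"
    by (intro sum.cong refl) (simp add: Suc.prems S_carrier)
  finally show ?case .
qed

lemma fin_cp: "finite (supp_fn G (cp n))"
proof (induction n)
  case 0
  have "supp_fn G (cp 0) \<subseteq> {\<one>}" by (auto simp: supp_fn_def split: if_splits)
  then show ?case by (rule finite_subset) simp
next
  case (Suc n)
  have "supp_fn G (cp (Suc n)) \<subseteq> (\<lambda>(a,s). a \<otimes> s) ` (supp_fn G (cp n) \<times> S)"
  proof
    fix g assume g: "g \<in> supp_fn G (cp (Suc n))"
    then have gc: "g \<in> carrier G" and nz: "(\<Sum>s\<in>S. cp n (g \<otimes> inv s) * mu s) \<noteq> 0"
      by (auto simp: supp_fn_def)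
    then obtain s where s: "s \<in> S" "cp n (g \<otimes> inv s) * mu s \<noteq> 0"
      by (meson sum.not_neutral_contains_not_neutral)
    have sc: "s \<in> carrier G" by (rule S_carrier[OF s(1)])
    have ac: "g \<otimes> inv s \<in> carrier G" using gc sc by simp
    have "g \<otimes> inv s \<in> supp_fn G (cp n)" using s ac by (auto simp: supp_fn_def)
    moreover have "(g \<otimes> inv s) \<otimes> s = g" using gc sc by (simp add: m_assoc)
    ultimately show "g \<in> (\<lambda>(a,s). a \<otimes> s) ` (supp_fn G (cp n) \<times> S)"
      using s(1) by (auto intro!: image_eqI[of _ _ "(g \<otimes> inv s, s)"])
  qed
  then show ?case by (rule finite_subset) (use Suc fin_supp in auto)
qed

lemma lcos_eq_H:
  assumes H: "subgroup H G" and x: "x \<in> carrier G"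
  shows "x <# H = H \<longleftrightarrow> x \<in> H"
proof
  assume "x <# H = H"
  moreover have "x \<in> x <# H"
    using mem_lcos[OF H x, of x] x subgroup.one_closed[OF H] by simp
  ultimately show "x \<in> H" by simp
next
  assume xH: "x \<in> H"
  have ixH: "inv x \<in> H" by (rule subgroup.m_inv_closed[OF H xH])
  show "x <# H = H"
  proof
    show "x <# H \<subseteq> H"
    proof
      fix y assume "y \<in> x <# H"
      then have y: "y \<in> carrier G" "inv x \<otimes> y \<in> H" using mem_lcos[OF H x] by auto
      have "y = x \<otimes> (inv x \<otimes> y)" using y x by (simp add: m_assoc[symmetric])
      then show "y \<in> H" using subgroup.m_closed[OF H xH y(2)] by simp
    qed
    show "H \<subseteq> x <# H"
    proof
      fix y assume yH: "y \<in> H"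
      have "y \<in> carrier G" by (rule subgroup.mem_carrier[OF H yH])
      then show "y \<in> x <# H" using mem_lcos[OF H x] subgroup.m_closed[OF H ixH yH] by simp
    qed
  qed
qed

lemma mass_base:
  assumes H: "subgroup H G" and x: "x \<in> carrier G"
  shows "mass G (cp 0) (x <# H) = (if x <# H = H then 1 else 0)"
proof -
  have sp: "supp_fn G (cp 0) = {\<one>}" by (auto simp: supp_fn_def)
  have "\<one> \<in> x <# H \<longleftrightarrow> x \<in> H"
  proof -
    have "\<one> \<in> x <# H \<longleftrightarrow> inv x \<in> H" using mem_lcos[OF H x, of \<one>] x by simp
    also have "\<dots> \<longleftrightarrow> x \<in> H" using subgroup.m_inv_closed[OF H, of "inv x"] subgroup.m_inv_closed[OF H, of x] x
      by auto
    finally show ?thesis .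
  qed
  then show ?thesis unfolding mass_def sp using lcos_eq_H[OF H x] by auto
qed

lemma mass_rec:
  assumes H: "subgroup H G" and x: "x \<in> carrier G"
  shows "mass G (cp (Suc n)) (x <# H) = (\<Sum>s\<in>S. mu s * mass G (cp n) ((inv s \<otimes> x) <# H))"
proof -
  define P1 where "P1 = supp_fn G (cp (Suc n))"
  define P where "P = supp_fn G (cp n)"
  define A where "A = x <# H"
  have fP1: "finite (P1 \<inter> A)" using fin_cp[of "Suc n"] by (simp add: P1_def)
  have fP: "\<And>B. finite (P \<inter> B)" using fin_cp[of n] by (simp add: P_def)
  have P1c: "\<And>g. g \<in> P1 \<Longrightarrow> g \<in> carrier G" by (simp add: P1_def supp_fn_def)
  have "mass G (cp (Suc n)) A = (\<Sum>g\<in>P1 \<inter> A. \<Sum>s\<in>S. mu s * cp n (inv s \<otimes> g))"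
    unfolding mass_def P1_def[symmetric]
  proof (intro sum.cong refl)
    fix g assume "g \<in> P1 \<inter> A"
    then have "g \<in> carrier G" using P1c by auto
    then show "cp (Suc n) g = (\<Sum>s\<in>S. mu s * cp n (inv s \<otimes> g))" by (rule cp_left)
  qed
  also have "\<dots> = (\<Sum>s\<in>S. \<Sum>g\<in>P1 \<inter> A. mu s * cp n (inv s \<otimes> g))" by (rule sum.swap)
  also have "\<dots> = (\<Sum>s\<in>S. mu s * mass G (cp n) ((inv s \<otimes> x) <# H))"
  proof (intro sum.cong refl)
    fix s assume s: "s \<in> S"
    have sc: "s \<in> carrier G" by (rule S_carrier[OF s])
    define B where "B = (inv s \<otimes> x) <# H"
    have isx: "inv s \<otimes> x \<in> carrier G" using sc x by simp
    have iinv: "inv (inv s \<otimes> x) = inv x \<otimes> s" using sc x by (simp add: inv_mult_group)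
    have inj: "inj_on (\<lambda>y. s \<otimes> y) (P \<inter> B)"
      by (rule inj_onI) (use sc in \<open>auto simp: P_def supp_fn_def\<close>)
    have "mass G (cp n) B = (\<Sum>y\<in>P \<inter> B. cp n (inv s \<otimes> (s \<otimes> y)))"
      unfolding mass_def P_def[symmetric]
      by (intro sum.cong refl) (use sc in \<open>auto simp: P_def supp_fn_def m_assoc[symmetric]\<close>)
    also have "\<dots> = (\<Sum>g\<in>(\<lambda>y. s \<otimes> y) ` (P \<inter> B). cp n (inv s \<otimes> g))"
      by (rule sum.reindex[OF inj, unfolded comp_def, symmetric])
    also have "\<dots> = (\<Sum>g\<in>P1 \<inter> A. cp n (inv s \<otimes> g))"
    proof (rule sum.mono_neutral_left[OF fP1])
      show "(\<lambda>y. s \<otimes> y) ` (P \<inter> B) \<subseteq> P1 \<inter> A"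
      proof
        fix g assume "g \<in> (\<lambda>y. s \<otimes> y) ` (P \<inter> B)"
        then obtain y where y: "y \<in> P" "y \<in> B" "g = s \<otimes> y" by auto
        have yc: "y \<in> carrier G" using y(1) by (simp add: P_def supp_fn_def)
        have gc: "g \<in> carrier G" using y(3) yc sc by simp
        have "inv (inv s \<otimes> x) \<otimes> y \<in> H" using y(2) mem_lcos[OF H isx] by (simp add: B_def)
        then have "inv x \<otimes> g \<in> H" using y(3) iinv x sc yc by (simp add: m_assoc)
        then have gA: "g \<in> A" using mem_lcos[OF H x] gc by (simp add: A_def)
        have ygt: "cp n y > 0" using y(1) cp_nn[of n y] by (simp add: P_def supp_fn_def)
        have iy: "inv s \<otimes> g = y" using y(3) sc yc by (simp add: m_assoc[symmetric])
        have "mu s * cp n (inv s \<otimes> g) \<le> (\<Sum>t\<in>S. mu t * cp n (inv t \<otimes> g))"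
          by (rule member_le_sum[OF s]) (auto simp: mu_nn cp_nn fin_supp)
        moreover have "mu s * cp n (inv s \<otimes> g) > 0" using iy ygt S_pos[OF s] by simp
        ultimately have "cp (Suc n) g > 0" using cp_left[OF gc, of n] by simp
        then have "g \<in> P1" using gc by (simp add: P1_def supp_fn_def)
        then show "g \<in> P1 \<inter> A" using gA by simp
      qed
      show "\<forall>g\<in>P1 \<inter> A - (\<lambda>y. s \<otimes> y) ` (P \<inter> B). cp n (inv s \<otimes> g) = 0"
      proof (rule ballI, rule ccontr)
        fix g assume g: "g \<in> P1 \<inter> A - (\<lambda>y. s \<otimes> y) ` (P \<inter> B)" and nz: "cp n (inv s \<otimes> g) \<noteq> 0"
        have gc: "g \<in> carrier G" using g P1c by auto
        have yc: "inv s \<otimes> g \<in> carrier G" using gc sc by simp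
        have yP: "inv s \<otimes> g \<in> P" using nz yc by (simp add: P_def supp_fn_def)
        have "inv x \<otimes> g \<in> H" using g mem_lcos[OF H x] by (simp add: A_def)
        moreover have "inv (inv s \<otimes> x) \<otimes> (inv s \<otimes> g) = inv x \<otimes> g"
        proof -
          have c: "s \<otimes> (inv s \<otimes> g) = g" using sc gc by (simp add: m_assoc[symmetric])
          show ?thesis using iinv x sc gc c by (simp add: m_assoc)
        qed
        ultimately have "inv s \<otimes> g \<in> B" using mem_lcos[OF H isx] yc by (simp add: B_def)
        moreover have "s \<otimes> (inv s \<otimes> g) = g" using sc gc by (simp add: m_assoc[symmetric])
        ultimately show False using g yP by (metis DiffD2 IntI image_eqI)
      qed
    qed
    finally show "(\<Sum>g\<in>P1 \<inter> A. mu s * cp n (inv s \<otimes> g)) = mu s * mass G (cp n) ((inv s \<otimes> x) <# H)"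
      by (simp add: B_def sum_distrib_left)
  qed
  finally show ?thesis by (simp add: A_def)
qed

lemma generate_act:
  assumes "z \<in> generate G S"
    and Bsub: "\<And>c. c \<in> B \<Longrightarrow> c \<subseteq> carrier G"
    and cl: "\<And>s c. s \<in> S \<Longrightarrow> c \<in> B \<Longrightarrow> s <# c \<in> B"
  shows "\<forall>c\<in>B. z <# c \<in> B"
  using assms(1)
proof (induction z rule: generate.induct)
  case one
  then show ?case using Bsub lcos_mult_one by simp
next
  case (incl h)
  then show ?case using cl by simp
next
  case (inv h)
  then show ?case using cl S_inv by simp
next
  case (eng h1 h2)
  have Sc: "S \<subseteq> carrier G" using S_carrier by auto
  have h1c: "h1 \<in> carrier G" by (rule generate_in_carrier[OF Sc eng.hyps(1)])
  have h2c: "h2 \<in> carrier G" by (rule generate_in_carrier[OF Sc eng.hyps(2)])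
  show ?case
  proof
    fix c assume c: "c \<in> B"
    have "(h1 \<otimes> h2) <# c = h1 <# (h2 <# c)" using lcos_m_assoc[OF Bsub[OF c] h1c h2c] by simp
    then show "(h1 \<otimes> h2) <# c \<in> B" using eng.IH c by simp
  qed
qed

lemma walk_inst:
  assumes H: "subgroup H G"
  shows "walk {x <# H | x. x \<in> carrier G} S mu (\<lambda>s (c::'a set). s <# c) (\<lambda>s. inv s) \<one>"
proof -
  have Hc: "H \<subseteq> carrier G" by (rule subgroup.subset[OF H])
  have Xc: "\<And>c. c \<in> {x <# H | x. x \<in> carrier G} \<Longrightarrow> c \<subseteq> carrier G"
    using l_coset_subset_G[OF Hc] by auto
  show ?thesis
  proof
    show "finite S" by (rule fin_supp)
    show "\<And>s. s \<in> S \<Longrightarrow> mu s > 0" by (rule S_pos)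
    show "(\<Sum>s\<in>S. mu s) = 1" by (rule mu_sum)
    show "\<one> \<in> S" by (rule one_S)
    show "\<And>c. c \<in> {x <# H | x. x \<in> carrier G} \<Longrightarrow> \<one> <# c = c" using Xc lcos_mult_one by simp
    show "\<And>s c. s \<in> S \<Longrightarrow> c \<in> {x <# H | x. x \<in> carrier G} \<Longrightarrow> s <# c \<in> {x <# H | x. x \<in> carrier G}"
    proof -
      fix s c assume s: "s \<in> S" and "c \<in> {x <# H | x. x \<in> carrier G}"
      then obtain x where x: "x \<in> carrier G" "c = x <# H" by auto
      have "s <# c = (s \<otimes> x) <# H" using lcos_m_assoc[OF Hc S_carrier[OF s] x(1)] x(2) by simp
      then show "s <# c \<in> {x <# H | x. x \<in> carrier G}" using x(1) S_carrier[OF s] by auto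
    qed
    show "\<And>s. s \<in> S \<Longrightarrow> inv s \<in> S" by (rule S_inv)
    show "\<And>s. s \<in> S \<Longrightarrow> inv (inv s) = s" using S_carrier by simp
    show "\<And>s. s \<in> S \<Longrightarrow> mu (inv s) = mu s" using S_carrier mu_sym by simp
    show "\<And>s c. s \<in> S \<Longrightarrow> c \<in> {x <# H | x. x \<in> carrier G} \<Longrightarrow> inv s <# (s <# c) = c"
    proof -
      fix s c assume s: "s \<in> S" and c: "c \<in> {x <# H | x. x \<in> carrier G}"
      have sc: "s \<in> carrier G" by (rule S_carrier[OF s])
      have "inv s <# (s <# c) = (inv s \<otimes> s) <# c" using lcos_m_assoc[OF Xc[OF c] inv_closed[OF sc] sc] .
      also have "\<dots> = c" using sc lcos_mult_one[OF Xc[OF c]] by simp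
      finally show "inv s <# (s <# c) = c" .
    qed
    show "\<And>v B. v \<in> B \<Longrightarrow> B \<subseteq> {x <# H | x. x \<in> carrier G} \<Longrightarrow>
        (\<And>s c. s \<in> S \<Longrightarrow> c \<in> B \<Longrightarrow> s <# c \<in> B) \<Longrightarrow> {x <# H | x. x \<in> carrier G} \<subseteq> B"
    proof -
      fix v B assume vB: "v \<in> B" and BX: "B \<subseteq> {x <# H | x. x \<in> carrier G}"
        and cl: "\<And>s c. s \<in> S \<Longrightarrow> c \<in> B \<Longrightarrow> s <# c \<in> B"
      have Bsub: "\<And>c. c \<in> B \<Longrightarrow> c \<subseteq> carrier G" using BX Xc by auto
      obtain y where y: "y \<in> carrier G" "v = y <# H" using vB BX by auto
      show "{x <# H | x. x \<in> carrier G} \<subseteq> B"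
      proof
        fix c assume "c \<in> {x <# H | x. x \<in> carrier G}"
        then obtain x where x: "x \<in> carrier G" "c = x <# H" by auto
        have z: "x \<otimes> inv y \<in> generate G S" using x y mu_gen by simp
        have "(x \<otimes> inv y) <# v \<in> B" using generate_act[OF z Bsub cl] vB by simp
        moreover have "(x \<otimes> inv y) <# v = c"
        proof -
          have "(x \<otimes> inv y) <# v = (x \<otimes> inv y \<otimes> y) <# H"
            using lcos_m_assoc[OF Hc _ y(1), of "x \<otimes> inv y"] x y by simp
          also have "x \<otimes> inv y \<otimes> y = x" using x y by (simp add: m_assoc)
          finally show ?thesis using x by simp
        qed
        ultimately show "c \<in> B" by simp
      qed
    qed
  qed
qed

lemma main_H:
  assumes H: "subgroup H G" and x: "x \<in> carrier G" and eps: "\<epsilon> > 0"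
    and m: "m \<ge> 2 * nat \<lceil>2 / (mu \<one> * Min (mu ` S) / 160 * \<epsilon>^3)\<rceil>"
  shows "\<bar>mass G (cp m) (x <# H) - inv_index G H\<bar> < \<epsilon>"
proof -
  define XX where "XX = {x <# H | x. x \<in> carrier G}"
  interpret W: walk XX S mu "\<lambda>s (c::'a set). s <# c" "\<lambda>s. inv s" \<one>
    unfolding XX_def by (rule walk_inst[OF H])
  have Hc: "H \<subseteq> carrier G" by (rule subgroup.subset[OF H])
  have HX: "H \<in> XX" unfolding XX_def using lcos_mult_one[OF Hc] by (auto intro!: exI[of _ \<one>])
  have xX: "x <# H \<in> XX" unfolding XX_def using x by auto
  have mF: "\<And>y. y \<in> carrier G \<Longrightarrow> mass G (cp n) (y <# H) = W.F H n (y <# H)" for n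
  proof (induction n)
    case 0
    then show ?case using mass_base[OF H] by (simp add: W.F_def W.delta_def)
  next
    case (Suc n)
    fix y assume y: "y \<in> carrier G"
    have "mass G (cp (Suc n)) (y <# H) = (\<Sum>s\<in>S. mu s * mass G (cp n) ((inv s \<otimes> y) <# H))"
      by (rule mass_rec[OF H y])
    also have "\<dots> = (\<Sum>s\<in>S. mu s * W.F H n ((inv s \<otimes> y) <# H))"
      using Suc.IH y S_carrier by simp
    also have "\<dots> = (\<Sum>s\<in>S. mu s * W.F H n ((s \<otimes> y) <# H))"
      by (rule sum.reindex_bij_witness[of S "\<lambda>s. inv s" "\<lambda>s. inv s"]) (auto simp: S_inv S_carrier mu_sym)
    also have "\<dots> = (\<Sum>s\<in>S. mu s * W.F H n (s <# (y <# H)))"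
      using S_carrier y lcos_m_assoc[OF Hc] by (intro sum.cong refl) auto
    also have "\<dots> = W.F H (Suc n) (y <# H)" by (simp add: W.F_Suc W.T_def)
    finally show "mass G (cp (Suc n)) (y <# H) = W.F H (Suc n) (y <# H)" .
  qed
  have bij: "bij_betw (\<lambda>A. set_inv A) XX (rcosets H)" unfolding XX_def by (rule lcos_rcos_bij[OF H])
  have fe: "finite XX \<longleftrightarrow> finite (rcosets H)" by (rule bij_betw_finite[OF bij])
  have ce: "card XX = card (rcosets H)" by (rule bij_betw_same_card[OF bij])
  have ufin: "finite XX \<Longrightarrow> inv_index G H * real (card XX) = 1"
  proof -
    assume fX: "finite XX"
    then have "card XX > 0" using HX by (auto simp: card_gt_0_iff)
    then have "card (rcosets H) > 0" using ce by simp
    then have "rcosets H \<noteq> {}" by (metis card.empty less_irrefl)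
    then show ?thesis using fX fe ce by (simp add: inv_index_def)
  qed
  have uinf: "infinite XX \<Longrightarrow> inv_index G H = 0" using fe by (simp add: inv_index_def)
  have kap: "W.kap = mu \<one> * Min (mu ` S) / 160" by (simp add: W.kap_def W.wmin_def)
  have "\<bar>W.F H m (x <# H) - inv_index G H\<bar> < \<epsilon>"
  proof -
    have m': "m \<ge> 2 * nat \<lceil>2 / (W.kap * \<epsilon>^3)\<rceil>" using m by (simp only: kap)
    show ?thesis by (rule W.uniform[OF ufin uinf HX xX eps m'])
  qed
  then show ?thesis using mF[OF x] by simp
qed

end

context group begin

end
theorem theorem1p14:
  fixes G :: "('a, 'b) monoid_scheme" and mu :: "'a \<Rightarrow> real"
  assumes "group G"
    and "finitely_generated_group G"
    and "\<And>g. mu g \<ge> 0"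
    and "\<And>g. g \<notin> carrier G \<Longrightarrow> mu g = 0"
    and "finite (supp_fn G mu)"
    and "(\<Sum>g\<in>supp_fn G mu. mu g) = 1"
    and "\<And>g. g \<in> carrier G \<Longrightarrow> mu (inv\<^bsub>G\<^esub> g) = mu g"
    and "generate G (supp_fn G mu) = carrier G"
    and "mu \<one>\<^bsub>G\<^esub> > 0"
  shows "measures_index_uniformly G (\<lambda>n. conv_pow G mu (Suc n))"
proof -
  interpret R: rw G mu
    by (rule rw.intro[OF assms(1)], unfold_locales) (use assms in auto)
  show ?thesis
    unfolding measures_index_uniformly_def
  proof (intro allI impI)
    fix \<epsilon> :: real assume eps: "\<epsilon> > 0"
    define N where "N = 2 * nat \<lceil>2 / (mu \<one>\<^bsub>G\<^esub> * Min (mu ` supp_fn G mu) / 160 * \<epsilon>^3)\<rceil>"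
    show "\<exists>N. \<forall>n\<ge>N. \<forall>x\<in>carrier G. \<forall>H. subgroup H G \<longrightarrow>
        \<bar>mass G (conv_pow G mu (Suc n)) (x <#\<^bsub>G\<^esub> H) - inv_index G H\<bar> < \<epsilon>"
    proof (intro exI allI impI ballI)
      fix n x H assume n: "N \<le> n" and x: "x \<in> carrier G" and H: "subgroup H G"
      have "Suc n \<ge> 2 * nat \<lceil>2 / (mu \<one>\<^bsub>G\<^esub> * Min (mu ` supp_fn G mu) / 160 * \<epsilon>^3)\<rceil>"
        using n unfolding N_def by simp
      then show "\<bar>mass G (conv_pow G mu (Suc n)) (x <#\<^bsub>G\<^esub> H) - inv_index G H\<bar> < \<epsilon>"
        by (rule R.main_H[OF H x eps])
    qed
  qed
qed

end
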